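(* Let $n\ge3$ be odd, $d,R\in\mathbb{Q}$, $d\ne0$, $R$ not a square, $D=d^2-R$, and fix a square root $\sqrt R\in\mathbb{C}$. Let $y,y'\in\mathbb{C}$ satisfy $y^n=d+\sqrt R$ and $y'^n=d-\sqrt R$, and put $z=yy'$ and $u=z^{(n-1)/2}(y+y')$ (so $z^n=D$ and $f_n(u,d,R)=0$). Then $$\{y,y'\}=\Big\{\,z^{(n+1)/2}\Big(\frac{u}{2D}+A(u)\sqrt R\Big),\ z^{(n+1)/2}\Big(\frac{u}{2D}-A(u)\sqrt R\Big)\Big\}.$$
   Context: For $k\ge1$, $F_k=\sum_{j=0}^{\lfloor k/2\rfloor}(-1)^j\frac{k}{k-j}\binom{k-j}{j}Z^{k-2j}$ (so $2\cos(kx)=F_k(2\cos x)$). $f_n(Z,d,R)=\sqrt D^{\,n}F_n(Z/\sqrt D)-2dD^{(n-1)/2}=\sum_{j=0}^{(n-1)/2}(-1)^j\frac{n}{n-j}\binom{n-j}{j}D^jZ^{n-2j}-2dD^{(n-1)/2}$. The polynomial $A\in\mathbb{Q}[Z]$ is $$A=\frac{1}{2R}\Big(F_{n-1}(Z/\sqrt D)-\frac{dZ}{D}\Big),\qquad F_{n-1}(Z/\sqrt D)=\sum_{j=0}^{(n-1)/2}(-1)^j\frac{n-1}{n-1-j}\binom{n-1-j}{j}D^{\,j-(n-1)/2}Z^{n-1-2j}.$$ *)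

theory Defs
  imports Complex_Main
begin

text \<open>Coefficient of Z^(k-2j) in F_k: (-1)^j * k/(k-j) * binom(k-j, j).\<close>
definition F_coef :: "nat \<Rightarrow> nat \<Rightarrow> rat" where
  "F_coef k j = (-1) ^ j * (of_nat k / of_nat (k - j)) * of_nat ((k - j) choose j)"

text \<open>The polynomial A in Q[Z] (evaluated at a complex Z), with D = d^2 - R:
  A = 1/(2R) * ( F_{n-1}(Z / sqrt D) - d Z / D ), where
  F_{n-1}(Z/sqrt D) = sum_{j=0}^{(n-1)/2} F_coef (n-1) j * D^(j-(n-1)/2) * Z^(n-1-2j).\<close>
definition A_poly :: "nat \<Rightarrow> rat \<Rightarrow> rat \<Rightarrow> complex \<Rightarrow> complex" where
  "A_poly n d R Z =
     (let D = d\<^sup>2 - R in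
      (1 / (2 * of_rat R)) *
        ((\<Sum>j = 0..(n - 1) div 2.
            of_rat (F_coef (n - 1) j * D powi (int j - int ((n - 1) div 2))) * Z ^ (n - 1 - 2 * j))
         - of_rat d * Z / of_rat D))"

end

theory Submission imports Defs begin

definition cc :: "nat \<Rightarrow> nat \<Rightarrow> complex \<Rightarrow> complex \<Rightarrow> complex" where
  "cc k j s p = (-1)^j * of_nat ((k-j) choose j) * s^(k-2*j) * p^j"

definition PP :: "nat \<Rightarrow> complex \<Rightarrow> complex \<Rightarrow> complex" where
  "PP k s p = (\<Sum>j\<le>k. cc k j s p)"

lemma cc_zero: "k < 2*j \<Longrightarrow> cc k j s p = 0"
  unfolding cc_def by (simp add: binomial_eq_0)

lemma cc_rec: "cc (k+2) (Suc i) s p = s * cc (k+1) (Suc i) s p - p * cc k i s p"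
proof (cases "k < 2*i")
  case True
  then show ?thesis by (simp add: cc_def binomial_eq_0)
next
  case False
  show ?thesis
  proof (cases "k = 2*i")
    case True
    then show ?thesis by (simp add: cc_def binomial_eq_0)
  next
    case False2: False
    with False obtain r where k: "k = 2*i+1+r" by (metis add.commute add_Suc_right less_imp_Suc_add linorder_neqE_nat mult_2 plus_1_eq_Suc)
    have e1: "k + 2 - Suc i = Suc (i + 1 + r)" using k by simp
    have e2: "k + 1 - Suc i = i+1+r" using k by simp
    have e3: "k - i = i+1+r" using k by simp
    have e4: "k + 2 - 2 * Suc i = Suc r" using k by simp
    have e5: "k + 1 - 2 * Suc i = r" using k by simp
    have e6: "k - 2*i = Suc r" using k by simp
    show ?thesis unfolding cc_def e1 e2 e3 e4 e5 e6 binomial_Suc_Suc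
      by (simp add: algebra_simps)
  qed
qed

lemma sum_cc_range: "finite A \<Longrightarrow> {..k div 2} \<subseteq> A \<Longrightarrow>
    (\<Sum>j\<in>A. cc k j s p) = (\<Sum>j\<le>k div 2. cc k j s p)"
  by (rule sum.mono_neutral_right) (auto intro!: cc_zero)

lemma PP_alt: "PP k s p = (\<Sum>j\<le>k div 2. cc k j s p)"
  unfolding PP_def by (rule sum_cc_range) auto

lemma PP_rec: "PP (k+2) s p = s * PP (k+1) s p - p * PP k s p"
proof -
  have "PP (k+2) s p = cc (k+2) 0 s p + (\<Sum>i\<le>k+1. cc (k+2) (Suc i) s p)"
    unfolding PP_def by (simp add: sum.atMost_Suc_shift del: sum.atMost_Suc)
  also have "(\<Sum>i\<le>k+1. cc (k+2) (Suc i) s p) = (\<Sum>i\<le>k+1. s * cc (k+1) (Suc i) s p - p * cc k i s p)"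
    by (simp only: cc_rec)
  also have "\<dots> = s * (\<Sum>i\<le>k+1. cc (k+1) (Suc i) s p) - p * (\<Sum>i\<le>k+1. cc k i s p)"
    by (simp only: sum_subtractf sum_distrib_left)
  also have "(\<Sum>i\<le>k+1. cc (k+1) (Suc i) s p) = (\<Sum>i\<le>k. cc (k+1) (Suc i) s p)"
    by (simp add: cc_zero)
  also have "(\<Sum>i\<le>k+1. cc k i s p) = PP k s p"
    unfolding PP_def by (simp add: cc_zero)
  also have "cc (k+2) 0 s p = s * cc (k+1) 0 s p" by (simp add: cc_def)
  finally show ?thesis unfolding PP_def
    by (simp add: sum.atMost_Suc_shift algebra_simps del: sum.atMost_Suc)
qed

definition hh :: "nat \<Rightarrow> complex \<Rightarrow> complex \<Rightarrow> complex" where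
  "hh k a b = (\<Sum>i\<le>k. a^i * b^(k-i))"

lemma hh_Suc: "hh (Suc k) a b = a^Suc k + b * hh k a b"
  unfolding hh_def by (simp add: sum_distrib_left Suc_diff_le mult.assoc mult.left_commute)

lemma hh_rec: "hh (k+2) a b = (a+b) * hh (k+1) a b - (a*b) * hh k a b"
proof -
  have e2: "hh (k+2) a b = a^(k+2) + b * hh (Suc k) a b" using hh_Suc[of "Suc k" a b] by simp
  have e3: "a * hh (Suc k) a b = a^(k+2) + a*b*hh k a b" using hh_Suc[of k a b]
    by (simp add: algebra_simps)
  show ?thesis unfolding e2 using e3 by (simp add: algebra_simps)
qed

lemma PP_hh: "PP k (a+b) (a*b) = hh k a b"
proof -
  have "PP k (a+b) (a*b) = hh k a b \<and> PP (Suc k) (a+b) (a*b) = hh (Suc k) a b"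
  proof (induction k)
    case 0
    then show ?case by (simp add: PP_def hh_def cc_def)
  next
    case (Suc k)
    then show ?case using PP_rec[of k "a+b" "a*b"] hh_rec[of k a b] by simp
  qed
  then show ?thesis by simp
qed

lemma hh_diff: "hh (k+2) a b - a*b*hh k a b = a^(k+2) + b^(k+2)"
proof -
  have "hh (Suc k) a b = b^Suc k + a * hh k a b"
    unfolding hh_def
    by (simp add: sum.atMost_Suc_shift sum_distrib_left del: sum.atMost_Suc) (simp add: algebra_simps)
  then show ?thesis using hh_Suc[of "Suc k" a b] by (simp add: algebra_simps)
qed

lemma Fcoef_split:
  assumes "1 \<le> j" "2*j \<le> k"
  shows "F_coef k j = (-1)^j * (of_nat ((k-j) choose j) + of_nat ((k-j-1) choose (j-1)))"
proof -
  obtain j' where j: "j = Suc j'" using assms by (cases j) auto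
  obtain N' where N: "k - j = Suc N'" using assms by (cases "k-j") auto
  have kk: "of_nat k = (of_nat (Suc N') + of_nat (Suc j') :: rat)" using N j assms by simp
  have key: "of_nat (Suc j') * of_nat (Suc N' choose Suc j') = (of_nat (Suc N') * of_nat (N' choose j') :: rat)"
    using Suc_times_binomial[of j' N'] by (metis of_nat_mult)
  have "F_coef k j = (-1)^j * ((of_nat (Suc N') + of_nat (Suc j')) / of_nat (Suc N') * of_nat (Suc N' choose Suc j'))"
    unfolding F_coef_def N unfolding kk j by (simp del: binomial_Suc_Suc of_nat_Suc)
  also have "(of_nat (Suc N') + of_nat (Suc j')) / of_nat (Suc N') * of_nat (Suc N' choose Suc j')
     = (of_nat (Suc N' choose Suc j') + of_nat (N' choose j') :: rat)"
    using key by (simp add: field_simps del: of_nat_Suc)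
  finally show ?thesis using N j by simp
qed

lemma Lucas:
  "(\<Sum>j=0..Suc m. of_rat (F_coef (2*Suc m) j) * s^(2*Suc m - 2*j) * p^j)
     = PP (2*Suc m) s p - p * PP (2*m) s p"
proof -
  have pt: "of_rat (F_coef (2*Suc m) j) * s^(2*Suc m - 2*j) * p^j
       = cc (2*Suc m) j s p + (if j = 0 then 0 else - p * cc (2*m) (j-1) s p)"
    if "j \<in> {0..Suc m}" for j
  proof (cases j)
    case 0
    then show ?thesis by (simp add: F_coef_def cc_def)
  next
    case (Suc i)
    with that have i: "i \<le> m" by simp
    have F: "F_coef (2*Suc m) j = (-1)^j * (of_nat ((2*Suc m-j) choose j) + of_nat ((2*m - i) choose i))"
      using Fcoef_split[of j "2*Suc m"] Suc i by simp
    have e: "2*Suc m - 2*j = 2*m - 2*i" using Suc by simp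
    show ?thesis unfolding F e using Suc
      by (simp add: cc_def of_rat_add of_rat_mult of_rat_diff of_rat_minus of_rat_power algebra_simps)
  qed
  have "(\<Sum>j=0..Suc m. of_rat (F_coef (2*Suc m) j) * s^(2*Suc m - 2*j) * p^j)
     = (\<Sum>j=0..Suc m. cc (2*Suc m) j s p) + (\<Sum>j=0..Suc m. (if j = 0 then 0 else - p * cc (2*m) (j-1) s p))"
    using pt by (simp add: sum.distrib)
  also have "(\<Sum>j=0..Suc m. cc (2*Suc m) j s p) = PP (2*Suc m) s p"
    unfolding PP_alt by (rule sum_cc_range) auto
  also have "(\<Sum>j=0..Suc m. (if j = 0 then 0 else - p * cc (2*m) (j-1) s p)) = - p * (\<Sum>i=0..m. cc (2*m) i s p)"
    by (subst sum.atLeast0_atMost_Suc_shift) (simp add: sum_distrib_left)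
  also have "(\<Sum>i=0..m. cc (2*m) i s p) = PP (2*m) s p"
    unfolding PP_alt by (rule sum_cc_range) auto
  finally show ?thesis by simp
qed

lemma Lucas2:
  fixes a b :: complex
  shows  "(\<Sum>j=0..Suc m. of_rat (F_coef (2*Suc m) j) * (a+b)^(2*Suc m - 2*j) * (a*b)^j)
     = a^(2*Suc m) + b^(2*Suc m)"
  unfolding Lucas PP_hh using hh_diff[of "2*m" a b] by (simp add: mult.assoc)

lemma final_alg:
  fixes y y' Y Y' sR :: complex
  assumes "y \<noteq> 0" "y' \<noteq> 0" "Y \<noteq> 0" "Y' \<noteq> 0" "sR \<noteq> 0"
    and "2 * sR = y*Y^2 - y'*Y'^2"
  shows "(y*y'*(Y*Y')) * ((Y*Y'*(y+y')) / (2 * ((y*Y^2)*(y'*Y'^2)))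
     + (1 / (2 * sR^2)) * ((Y^2+Y'^2)/(Y*Y') - ((y*Y^2 + y'*Y'^2)/2) * (Y*Y'*(y+y')) / ((y*Y^2)*(y'*Y'^2))) * sR) = y'"
    and "(y*y'*(Y*Y')) * ((Y*Y'*(y+y')) / (2 * ((y*Y^2)*(y'*Y'^2)))
     - (1 / (2 * sR^2)) * ((Y^2+Y'^2)/(Y*Y') - ((y*Y^2 + y'*Y'^2)/2) * (Y*Y'*(y+y')) / ((y*Y^2)*(y'*Y'^2))) * sR) = y"
proof -
  define T where "T = (Y^2+Y'^2)/(Y*Y') - ((y*Y^2 + y'*Y'^2)/2) * (Y*Y'*(y+y')) / ((y*Y^2)*(y'*Y'^2))"
  have T: "T = - (2*sR) * (y - y') / (2*y*y'*Y*Y')"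
    unfolding T_def assms(6) using assms(1-4)
    by (simp add: field_simps) (simp add: algebra_simps eval_nat_numeral)
  have A: "(1 / (2 * sR^2)) * T * sR = - (y - y') / (2*y*y'*Y*Y')"
    unfolding T using assms(1-5) by (simp add: field_simps power2_eq_square)
  have B: "(Y*Y'*(y+y')) / (2 * ((y*Y^2)*(y'*Y'^2))) = (y+y') / (2*y*y'*Y*Y')"
    using assms(1-4) by (simp add: field_simps power2_eq_square)
  have C: "(y*y'*(Y*Y')) * ((y+y') / (2*y*y'*Y*Y') + - (y - y') / (2*y*y'*Y*Y')) = y'"
    using assms(1-4) by (simp add: field_simps)
  have C2: "(y*y'*(Y*Y')) * ((y+y') / (2*y*y'*Y*Y') - - (y - y') / (2*y*y'*Y*Y')) = y"
    using assms(1-4) by (simp add: field_simps)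
  show "(y*y'*(Y*Y')) * ((Y*Y'*(y+y')) / (2 * ((y*Y^2)*(y'*Y'^2)))
     + (1 / (2 * sR^2)) * ((Y^2+Y'^2)/(Y*Y') - ((y*Y^2 + y'*Y'^2)/2) * (Y*Y'*(y+y')) / ((y*Y^2)*(y'*Y'^2))) * sR) = y'"
    using C unfolding B A[unfolded T_def] .
  show "(y*y'*(Y*Y')) * ((Y*Y'*(y+y')) / (2 * ((y*Y^2)*(y'*Y'^2)))
     - (1 / (2 * sR^2)) * ((Y^2+Y'^2)/(Y*Y') - ((y*Y^2 + y'*Y'^2)/2) * (Y*Y'*(y+y')) / ((y*Y^2)*(y'*Y'^2))) * sR) = y"
    using C2 unfolding B A[unfolded T_def] .
qed

lemma term_eq:
  fixes z s :: complex and D :: rat and F :: rat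
  assumes z: "z \<noteq> 0" and Dz: "of_rat D = z^(2*m+1)" and j: "j \<le> m"
  shows "of_rat (F * D powi (int j - int m)) * (z^m * s)^(2*m - 2*j) = of_rat F * s^(2*m-2*j) * z^j / z^m"
proof -
  obtain t where m: "m = j + t" using j le_Suc_ex by blast
  have pw: "D powi (int j - int m) = inverse D ^ t"
    unfolding power_int_def m by (simp add: nat_add_distrib)
  have e: "2*m - 2*j = 2*t" using m by simp
  have ex: "z^(m*(2*t)) * z^m = (z^(2*m+1))^t * z^j"
    unfolding power_mult[symmetric] power_add[symmetric] m by (simp add: algebra_simps)
  have "of_rat (F * D powi (int j - int m)) * (z^m * s)^(2*m - 2*j)
      = of_rat F * s^(2*t) * (z^(m*(2*t)) / (z^(2*m+1))^t)"
    unfolding pw e of_rat_mult of_rat_power of_rat_inverse Dz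
    by (simp add: power_mult_distrib power_mult[symmetric] power_inverse field_simps)
  also have "z^(m*(2*t)) / (z^(2*m+1))^t = z^j / z^m"
    using ex z by (simp add: field_simps)
  finally show ?thesis unfolding e by simp
qed

theorem proposition1:
  fixes n :: nat and d R :: rat and sR y y' :: complex
  assumes "odd n" and "n \<ge> 3"
    and "d \<noteq> 0"
    and "\<not> (\<exists>q::rat. q\<^sup>2 = R)"
    and "sR\<^sup>2 = of_rat R"
    and "y ^ n = of_rat d + sR"
    and "y' ^ n = of_rat d - sR"
  shows "(let D = d\<^sup>2 - R; z = y * y'; u = z ^ ((n - 1) div 2) * (y + y') in
          {y, y'} = {z ^ ((n + 1) div 2) * (u / (2 * of_rat D) + A_poly n d R u * sR),
                     z ^ ((n + 1) div 2) * (u / (2 * of_rat D) - A_poly n d R u * sR)})"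
proof -
  obtain m where n: "n = 2*m+1" using assms(1) oddE by blast
  obtain m' where m: "m = Suc m'" using assms(2) n by (cases m) auto
  define D where "D = d\<^sup>2 - R"
  define z where "z = y * y'"
  define u where "u = z ^ m * (y + y')"
  have R0: "R \<noteq> 0" using assms(4) by (metis power_zero_numeral)
  have sR0: "sR \<noteq> 0" using R0 assms(5) by auto
  have D0: "D \<noteq> 0" using assms(4) unfolding D_def by auto
  have zn: "z^n = of_rat D"
    unfolding z_def D_def power_mult_distrib assms(6,7) using assms(5)
    by (simp add: of_rat_diff of_rat_power of_rat_mult algebra_simps power2_eq_square)
  have z0: "z \<noteq> 0" using zn D0 by (metis of_rat_eq_0_iff zero_power n add_gr_0 zero_less_one)
  have y0: "y \<noteq> 0" "y' \<noteq> 0" using z0 z_def by auto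
  have e1: "(n - 1) div 2 = m" "(n+1) div 2 = Suc m" "n - 1 = 2*m" using n by auto
  have dm: "2*m div 2 = m" by simp
  have sum: "(\<Sum>j = 0..(n - 1) div 2.
            of_rat (F_coef (n - 1) j * D powi (int j - int ((n - 1) div 2))) * u ^ (n - 1 - 2 * j))
         = (y^(2*m) + y'^(2*m)) / z^m"
  proof -
    have "(\<Sum>j = 0..(n - 1) div 2.
            of_rat (F_coef (n - 1) j * D powi (int j - int ((n - 1) div 2))) * u ^ (n - 1 - 2 * j))
       = (\<Sum>j = 0..m. of_rat (F_coef (2*m) j) * (y+y')^(2*m-2*j) * z^j / z^m)"
      unfolding e1(3) u_def using dm
      by (simp only: dm, intro sum.cong[OF refl] term_eq) (use z0 zn n in auto)
    also have "\<dots> = (\<Sum>j = 0..m. of_rat (F_coef (2*m) j) * (y+y')^(2*m-2*j) * (y*y')^j) / z^m"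
      by (simp add: sum_divide_distrib z_def)
    also have "\<dots> = (y^(2*m) + y'^(2*m)) / z^m"
      unfolding m by (subst Lucas2) simp
    finally show ?thesis .
  qed
  have Aval: "A_poly n d R u = (1 / (2 * sR^2)) * (((y^m)^2 + (y'^m)^2) / (y^m * y'^m)
       - ((y*(y^m)^2 + y'*(y'^m)^2)/2) * (y^m*y'^m*(y+y')) / ((y*(y^m)^2)*(y'*(y'^m)^2)))"
  proof -
    have dd: "of_rat d = (y*(y^m)^2 + y'*(y'^m)^2)/2"
      using assms(6,7) n by (simp add: power_add power_mult[symmetric] field_simps mult.commute)
    have DD: "of_rat D = (y*(y^m)^2)*(y'*(y'^m)^2)"
      unfolding zn[symmetric] z_def n by (simp add: power_add power_mult_distrib power_mult[symmetric] algebra_simps)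
    have p2: "y^(2*m) = (y^m)^2" "y'^(2*m) = (y'^m)^2" by (simp_all add: power_mult[symmetric] mult.commute)
    have uu: "u = y^m*y'^m*(y+y')" unfolding u_def z_def by (simp add: power_mult_distrib)
    show ?thesis unfolding A_poly_def Let_def D_def[symmetric] sum
      unfolding assms(5)[symmetric] dd DD
      unfolding uu z_def power_mult_distrib p2
      by simp
  qed
  have sR2: "2 * sR = y*(y^m)^2 - y'*(y'^m)^2"
    using assms(6,7) n by (simp add: power_add power_mult[symmetric] mult.commute)
  have zz: "z ^ Suc m = y*y'*(y^m*y'^m)" unfolding z_def by (simp add: power_mult_distrib)
  have uD: "u / (2 * of_rat D) = (y^m*y'^m*(y+y')) / (2 * ((y*(y^m)^2)*(y'*(y'^m)^2)))"
  proof -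
    have DD: "of_rat D = (y*(y^m)^2)*(y'*(y'^m)^2)"
      unfolding zn[symmetric] z_def n by (simp add: power_add power_mult_distrib power_mult[symmetric] algebra_simps)
    show ?thesis unfolding DD u_def z_def by (simp add: power_mult_distrib)
  qed
  have Ym: "y^m \<noteq> 0" "y'^m \<noteq> 0" using y0 by auto
  note F = final_alg[OF y0 Ym sR0 sR2]
  show ?thesis unfolding Let_def D_def[symmetric] z_def[symmetric] e1(1,2) u_def[symmetric]
    unfolding zz uD Aval F by auto
qed

end
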